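(* The set of ramification points of the map $X:\mathbb P^1\to\mathbb P^1$, $X(z)=z/(\gamma G(S(z)))$, is the set $\mathcal L$ of zeros of $\phi$ if $LM=2$, and is $\mathcal L\cup\{\infty\}$ if $LM>2$.
   Context: Let $G(z)=1+\sum_{k=1}^Mg_kz^k$ with complex coefficients, $g_M\neq0$, let $S(z)=\sum_{k=1}^Lks_kz^k$ with complex $s_k$, $s_L\ne0$, $LM>1$, and $\gamma\in\mathbb C\setminus\{0\}$. Let $\phi(z)=G(S(z))-zG'(S(z))S'(z)$, a polynomial of degree $LM$, and $\mathcal L$ its zero set. A point $z_0\in\mathbb P^1$ is a ramification point of $X$ if $X$ is not invertible in any neighbourhood of $z_0$, i.e. either $X-X(z_0)$ vanishes to order $>1$ at $z_0$, or $X$ has a pole of order $\ge2$ at $z_0$. *)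

theory Defs
  imports "HOL-Complex_Analysis.Complex_Analysis"
begin

text \<open>Points of the Riemann sphere P^1 are represented as complex option:
  Some z is the finite point z, None is the point at infinity.\<close>

text \<open>Ramification of a (meromorphic) function at a finite point z0:
  either f has a pole of order at least 2 at z0, or f is not a pole at z0 and
  f - f(z0) vanishes to order > 1 at z0 (f(z0) taken as the limit value,
  which agrees with f z0 wherever f is continuous).\<close>
definition ramified_at :: "(complex \<Rightarrow> complex) \<Rightarrow> complex \<Rightarrow> bool" where
  "ramified_at f z0 \<longleftrightarrow>
     (is_pole f z0 \<and> zorder f z0 \<le> -2) \<or>
     (\<not> is_pole f z0 \<and> zorder (\<lambda>w. f w - Lim (at z0) f) z0 > 1)"

fun ramification_point :: "(complex \<Rightarrow> complex) \<Rightarrow> complex option \<Rightarrow> bool" where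
  "ramification_point f (Some z0) = ramified_at f z0"
| "ramification_point f None = ramified_at (\<lambda>w. f (1 / w)) 0"

end

theory Submission
  imports Defs "HOL-Computational_Algebra.Polynomial"
begin

lemma open_poly_nz: "open {w::complex. poly p w \<noteq> 0}"
  by (intro open_Collect_neq continuous_intros)

lemma zorder_poly_times:
  fixes p :: "complex poly"
  assumes "p \<noteq> 0" "open S" "z0 \<in> S" "h holomorphic_on S" "h z0 \<noteq> 0"
    and "\<And>w. w \<in> S \<Longrightarrow> f w = poly p w * h w"
  shows "zorder f z0 = int (order z0 p)"
proof -
  obtain q where q: "p = [:- z0, 1:] ^ order z0 p * q" "\<not> [:- z0, 1:] dvd q"
    using order_decomp[OF assms(1)] by blast
  have qz: "poly q z0 \<noteq> 0" using q(2) poly_eq_0_iff_dvd by blast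
  show ?thesis
  proof (rule zorder_eqI[where S="S \<inter> {w. poly q w \<noteq> 0}" and g="\<lambda>w. poly q w * h w"])
    show "open (S \<inter> {w. poly q w \<noteq> 0})" using assms(2) open_poly_nz by blast
    show "z0 \<in> S \<inter> {w. poly q w \<noteq> 0}" using assms(3) qz by blast
    show "(\<lambda>w. poly q w * h w) holomorphic_on S \<inter> {w. poly q w \<noteq> 0}"
      by (intro holomorphic_intros holomorphic_on_subset[OF assms(4)]) auto
    show "poly q z0 * h z0 \<noteq> 0" using qz assms(5) by simp
    fix w assume "w \<in> S \<inter> {w. poly q w \<noteq> 0}" "w \<noteq> z0"
    then have "f w = poly p w * h w" using assms(6) by blast
    also have "\<dots> = (poly q w * h w) * (w - z0) powi int (order z0 p)"
      by (subst q(1)) (simp add: poly_power power_int_of_nat algebra_simps)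
    finally show "f w = (poly q w * h w) * (w - z0) powi int (order z0 p)" .
  qed
qed

lemma pole_poly:
  fixes p :: "complex poly"
  assumes "p \<noteq> 0" "poly p z0 = 0" "z0 \<noteq> 0" "c \<noteq> 0"
  shows "is_pole (\<lambda>w. w / (c * poly p w)) z0 \<and> zorder (\<lambda>w. w / (c * poly p w)) z0 = - int (order z0 p)"
proof -
  obtain q where q: "p = [:- z0, 1:] ^ order z0 p * q" "\<not> [:- z0, 1:] dvd q"
    using order_decomp[OF assms(1)] by blast
  have qz: "poly q z0 \<noteq> 0" using q(2) poly_eq_0_iff_dvd by blast
  have ev: "eventually (\<lambda>w. poly q w \<noteq> 0) (at z0)"
    using tendsto_imp_eventually_ne[OF isCont_tendsto_compose[OF poly_isCont tendsto_ident_at] qz] .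
  have "filterlim (\<lambda>w. w / (c * poly p w)) at_infinity (at z0)"
  proof (rule filterlim_divide_at_infinity[OF _ _ assms(3)])
    show "filterlim (\<lambda>x. x) (nhds z0) (at z0)" by (rule tendsto_ident_at)
    have "((\<lambda>w. c * poly p w) \<longlongrightarrow> c * poly p z0) (at z0)"
      by (intro tendsto_intros isCont_tendsto_compose[OF poly_isCont] tendsto_ident_at)
    then have t: "((\<lambda>w. c * poly p w) \<longlongrightarrow> 0) (at z0)" using assms(2) by simp
    have "eventually (\<lambda>w. c * poly p w \<noteq> 0) (at z0)"
      using ev eventually_at_filter[of "\<lambda>w. w \<noteq> z0"]
    proof -
      have "eventually (\<lambda>w. w \<noteq> z0) (at z0)" by (simp add: eventually_at_filter)
      then show ?thesis using ev
        by eventually_elim (subst q(1), simp add: poly_power assms(4))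
    qed
    then show "filterlim (\<lambda>w. c * poly p w) (at 0) (at z0)"
      using t by (simp add: filterlim_at)
  qed
  then have "is_pole (\<lambda>w. w / (c * poly p w)) z0" by (simp add: is_pole_def)
  moreover have "zorder (\<lambda>w. w / (c * poly p w)) z0 = - int (order z0 p)"
  proof (rule zorder_eqI[where S="{w. poly q w \<noteq> 0}" and g="\<lambda>w. w / (c * poly q w)"])
    show "open {w. poly q w \<noteq> 0}" by (rule open_poly_nz)
    show "z0 \<in> {w. poly q w \<noteq> 0}" using qz by simp
    show "(\<lambda>w. w / (c * poly q w)) holomorphic_on {w. poly q w \<noteq> 0}"
      using assms(4) by (intro holomorphic_intros) auto
    show "z0 / (c * poly q z0) \<noteq> 0" using qz assms by simp
    fix w assume "w \<in> {w. poly q w \<noteq> 0}" "w \<noteq> z0"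
    then show "w / (c * poly p w) = w / (c * poly q w) * (w - z0) powi - int (order z0 p)"
      by (subst q(1)) (simp add: poly_power power_int_minus power_int_of_nat field_simps)
  qed
  ultimately show ?thesis by blast
qed

lemma setup_polys:
  fixes g s :: "nat \<Rightarrow> complex" and M L :: nat
  assumes "g M \<noteq> 0" and "s L \<noteq> 0" and "L * M > 1"
  shows "\<exists>Hp. (\<forall>z. 1 + (\<Sum>k=1..M. g k * (\<Sum>k=1..L. of_nat k * s k * z ^ k) ^ k) = poly Hp z)
     \<and> (\<forall>z. deriv (\<lambda>w. 1 + (\<Sum>k=1..M. g k * w ^ k)) (\<Sum>k=1..L. of_nat k * s k * z ^ k)
              * deriv (\<lambda>z. \<Sum>k=1..L. of_nat k * s k * z ^ k) z = poly (pderiv Hp) z)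
     \<and> degree Hp = L * M \<and> poly Hp 0 = 1"
proof -
  have M1: "M \<ge> 1" and L1: "L \<ge> 1" using assms(3) by (auto simp: Suc_le_eq intro!: Nat.gr0I)
  define Gp where "Gp = 1 + (\<Sum>k\<in>{1..M}. monom (g k) k)"
  define Sp where "Sp = (\<Sum>k\<in>{1..L}. monom (of_nat k * s k) k)"
  define Hp where "Hp = pcompose Gp Sp"
  have G: "(\<lambda>w. 1 + (\<Sum>k=1..M. g k * w ^ k)) = poly Gp"
    by (auto simp: Gp_def poly_sum poly_monom)
  have S: "(\<lambda>z. \<Sum>k=1..L. of_nat k * s k * z ^ k) = poly Sp"
    by (auto simp: Sp_def poly_sum poly_monom)
  have dG: "degree Gp = M"
  proof (rule antisym)
    show "degree Gp \<le> M" unfolding Gp_def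
      by (intro degree_add_le degree_sum_le) (auto intro: order.trans[OF degree_monom_le])
    have "coeff Gp M = g M" using M1
      by (simp add: Gp_def coeff_sum coeff_monom)
    then show "M \<le> degree Gp" using assms(1) le_degree by metis
  qed
  have dS: "degree Sp = L"
  proof (rule antisym)
    show "degree Sp \<le> L" unfolding Sp_def
      by (intro degree_sum_le) (auto intro: order.trans[OF degree_monom_le])
    have "coeff Sp L = of_nat L * s L" using L1
      by (simp add: Sp_def coeff_sum coeff_monom)
    then show "L \<le> degree Sp" using assms(2) L1 le_degree by (metis mult_eq_0_iff of_nat_eq_0_iff not_one_le_zero)
  qed
  have 1: "\<forall>z. 1 + (\<Sum>k=1..M. g k * (\<Sum>k=1..L. of_nat k * s k * z ^ k) ^ k) = poly Hp z"
    using G S by (simp add: Hp_def poly_pcompose fun_eq_iff)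
  have 2: "\<forall>z. deriv (\<lambda>w. 1 + (\<Sum>k=1..M. g k * w ^ k)) (\<Sum>k=1..L. of_nat k * s k * z ^ k)
              * deriv (\<lambda>z. \<Sum>k=1..L. of_nat k * s k * z ^ k) z = poly (pderiv Hp) z"
  proof
    fix z
    have "deriv (poly Gp) (poly Sp z) = poly (pderiv Gp) (poly Sp z)"
      by (rule DERIV_imp_deriv) (rule poly_DERIV)
    moreover have "deriv (poly Sp) z = poly (pderiv Sp) z"
      by (rule DERIV_imp_deriv) (rule poly_DERIV)
    moreover have Sz: "(\<Sum>k=1..L. of_nat k * s k * z ^ k) = poly Sp z" using S by metis
    ultimately show "deriv (\<lambda>w. 1 + (\<Sum>k=1..M. g k * w ^ k)) (\<Sum>k=1..L. of_nat k * s k * z ^ k)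
              * deriv (\<lambda>z. \<Sum>k=1..L. of_nat k * s k * z ^ k) z = poly (pderiv Hp) z"
      unfolding Sz G S by (simp add: Hp_def pderiv_pcompose poly_pcompose)
  qed
  have 3: "degree Hp = L * M" by (simp add: Hp_def degree_pcompose dG dS)
  have 4: "poly Hp 0 = 1" using 1[rule_format, of 0] by simp
  show ?thesis using 1 2 3 4 by blast
qed

theorem lemma7p7:
  fixes g s :: "nat \<Rightarrow> complex" and M L :: nat and \<gamma> :: complex
    and G S X \<phi> :: "complex \<Rightarrow> complex"
  assumes "g M \<noteq> 0" and "s L \<noteq> 0" and "L * M > 1" and "\<gamma> \<noteq> 0"
  defines "G \<equiv> (\<lambda>w. 1 + (\<Sum>k=1..M. g k * w ^ k))"
      and "S \<equiv> (\<lambda>z. \<Sum>k=1..L. of_nat k * s k * z ^ k)"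
      and "X \<equiv> (\<lambda>z. z / (\<gamma> * G (S z)))"
      and "\<phi> \<equiv> (\<lambda>z. G (S z) - z * deriv G (S z) * deriv S z)"
  shows "{p. ramification_point X p} =
           (if L * M = 2 then Some ` {z. \<phi> z = 0}
            else insert None (Some ` {z. \<phi> z = 0}))"
proof -
  obtain Hp where H1: "\<forall>z. 1 + (\<Sum>k=1..M. g k * (\<Sum>k=1..L. of_nat k * s k * z ^ k) ^ k) = poly Hp z"
     and H2: "\<forall>z. deriv (\<lambda>w. 1 + (\<Sum>k=1..M. g k * w ^ k)) (\<Sum>k=1..L. of_nat k * s k * z ^ k)
              * deriv (\<lambda>z. \<Sum>k=1..L. of_nat k * s k * z ^ k) z = poly (pderiv Hp) z"
     and dH: "degree Hp = L * M" and H0: "poly Hp 0 = 1"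
    using setup_polys[of g M s L, OF assms(1-3)] by blast
  have HS: "\<And>z. G (S z) = poly Hp z" unfolding G_def S_def by (rule H1[rule_format])
  have Xeq: "X = (\<lambda>z. z / (\<gamma> * poly Hp z))" by (simp add: X_def HS)
  have phieq: "\<And>z. \<phi> z = poly Hp z - z * poly (pderiv Hp) z"
  proof -
    fix z
    have "deriv G (S z) * deriv S z = poly (pderiv Hp) z"
      unfolding G_def S_def by (rule H2[rule_format])
    then show "\<phi> z = poly Hp z - z * poly (pderiv Hp) z"
      by (simp add: \<phi>_def HS mult.assoc)
  qed
  have Hnz: "Hp \<noteq> 0" using H0 by auto
  have dHnz: "pderiv Hp \<noteq> 0" using dH assms(3) by (simp add: pderiv_eq_0_iff) (metis mult_is_0 not_less_zero neq0_conv)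
  have fin: "ramified_at X z0 \<longleftrightarrow> \<phi> z0 = 0" for z0
  proof (cases "poly Hp z0 = 0")
    case True
    then have z0: "z0 \<noteq> 0" using H0 by auto
    from pole_poly[OF Hnz True z0 assms(4)]
    have "is_pole X z0" "zorder X z0 = - int (order z0 Hp)" unfolding Xeq by auto
    then have "ramified_at X z0 \<longleftrightarrow> order z0 Hp \<ge> 2" by (auto simp: ramified_at_def)
    also have "\<dots> \<longleftrightarrow> order z0 (pderiv Hp) \<noteq> 0" using order_pderiv[OF Hnz True] by linarith
    also have "\<dots> \<longleftrightarrow> poly (pderiv Hp) z0 = 0" using order_root[of "pderiv Hp" z0] dHnz by simp
    also have "\<dots> \<longleftrightarrow> \<phi> z0 = 0" using z0 True by (simp add: phieq)
    finally show ?thesis .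
  next
    case False
    define A where "A = {w. poly Hp w \<noteq> 0}"
    have oA: "open A" unfolding A_def by (rule open_poly_nz)
    have zA: "z0 \<in> A" using False by (simp add: A_def)
    have hol: "X holomorphic_on A" unfolding Xeq A_def using assms(4)
      by (intro holomorphic_intros) auto
    have np: "\<not> is_pole X z0" by (rule not_is_pole_holomorphic[OF oA zA hol])
    have "isCont X z0" using holomorphic_on_imp_continuous_on[OF hol] oA zA
      by (simp add: continuous_on_eq_continuous_at)
    then have LimX: "Lim (at z0) X = X z0"
      by (intro tendsto_Lim) (auto simp: isCont_def)
    define Np where "Np = smult (poly Hp z0) [:0, 1:] - smult z0 Hp"
    have Np0: "poly Np 0 = - z0" by (simp add: Np_def H0)
    have NpZ: "poly Np z0 = 0" by (simp add: Np_def)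
    have Nnz: "Np \<noteq> 0"
    proof
      assume "Np = 0"
      then have "z0 = 0" using Np0 by simp
      then have "Np = smult (poly Hp 0) [:0,1:]" by (simp add: Np_def)
      then show False using `Np = 0` H0 by simp
    qed
    have dN: "poly (pderiv Np) z0 = \<phi> z0"
      by (simp add: Np_def phieq pderiv_diff pderiv_smult pderiv_pCons)
    have zo: "zorder (\<lambda>w. X w - Lim (at z0) X) z0 = int (order z0 Np)"
    proof (rule zorder_poly_times[OF Nnz oA zA, where h="\<lambda>w. 1 / (\<gamma> * poly Hp w * poly Hp z0)"])
      show "(\<lambda>w. 1 / (\<gamma> * poly Hp w * poly Hp z0)) holomorphic_on A"
        unfolding A_def using assms(4) False by (intro holomorphic_intros) auto
      show "1 / (\<gamma> * poly Hp z0 * poly Hp z0) \<noteq> 0" using assms(4) False by simp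
      fix w assume "w \<in> A"
      then show "X w - Lim (at z0) X = poly Np w * (1 / (\<gamma> * poly Hp w * poly Hp z0))"
        using assms(4) False unfolding LimX by (simp add: Xeq A_def Np_def field_simps)
    qed
    have ord1: "order z0 Np = Suc (order z0 (pderiv Np))" by (rule order_pderiv[OF Nnz NpZ])
    have "ramified_at X z0 \<longleftrightarrow> order z0 Np > 1" using np zo by (simp add: ramified_at_def)
    also have "\<dots> \<longleftrightarrow> order z0 (pderiv Np) \<noteq> 0" using ord1 by linarith
    also have "\<dots> \<longleftrightarrow> \<phi> z0 = 0"
    proof (cases "pderiv Np = 0")
      case True
      then have "degree Np = 0" by (simp add: pderiv_eq_0_iff)
      then obtain c where "Np = [:c:]" using degree_eq_zeroE by blast
      then show ?thesis using NpZ Nnz by simp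
    next
      case False
      then show ?thesis using order_root[of "pderiv Np" z0] dN by auto
    qed
    finally show ?thesis .
  qed
  define n where "n = L * M"
  define R where "R = reflect_poly Hp"
  have R0: "poly R 0 \<noteq> 0" using Hnz by (simp add: R_def poly_0_coeff_0)
  have feq: "(\<lambda>w. X (1 / w)) = (\<lambda>w. w ^ (n - 1) / (\<gamma> * poly R w))"
  proof
    fix w :: complex
    show "X (1 / w) = w ^ (n - 1) / (\<gamma> * poly R w)"
    proof (cases "w = 0")
      case True
      then show ?thesis using assms(3) by (simp add: Xeq n_def)
    next
      case False
      have "poly R w = w ^ n * poly Hp (inverse w)"
        using poly_reflect_poly_nz[OF False, of Hp] by (simp add: R_def dH n_def)
      moreover have "w ^ n = w ^ (n - 1) * w" using assms(3) unfolding n_def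
        by (metis Suc_diff_1 mult_eq_0_iff neq0_conv not_less_zero power_Suc2 zero_less_one)
      ultimately show ?thesis using False assms(4)
        by (simp add: Xeq field_simps)
    qed
  qed
  define B where "B = {w. poly R w \<noteq> 0}"
  have oB: "open B" unfolding B_def by (rule open_poly_nz)
  have zB: "0 \<in> B" using R0 by (simp add: B_def)
  have holf: "(\<lambda>w. X (1 / w)) holomorphic_on B" unfolding feq B_def using assms(4)
    by (intro holomorphic_intros) auto
  have npf: "\<not> is_pole (\<lambda>w. X (1 / w)) 0" by (rule not_is_pole_holomorphic[OF oB zB holf])
  have "isCont (\<lambda>w. X (1 / w)) 0" using holomorphic_on_imp_continuous_on[OF holf] oB zB
    by (simp add: continuous_on_eq_continuous_at)
  then have Limf: "Lim (at 0) (\<lambda>w. X (1 / w)) = 0"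
    using assms(3) by (intro tendsto_Lim) (auto simp: isCont_def feq n_def power_0_left)
  have zof: "zorder (\<lambda>w. X (1 / w) - Lim (at 0) (\<lambda>w. X (1 / w))) 0 = int (n - 1)"
  proof (rule zorder_eqI[OF oB zB, where g="\<lambda>w. 1 / (\<gamma> * poly R w)"])
    show "(\<lambda>w. 1 / (\<gamma> * poly R w)) holomorphic_on B"
      unfolding B_def using assms(4) by (intro holomorphic_intros) auto
    show "1 / (\<gamma> * poly R 0) \<noteq> 0" using R0 assms(4) by simp
    fix w assume "w \<in> B" "w \<noteq> 0"
    then show "X (1 / w) - Lim (at 0) (\<lambda>w. X (1 / w)) = 1 / (\<gamma> * poly R w) * (w - 0) powi int (n - 1)"
      unfolding Limf using fun_cong[OF feq, of w] by (simp add: power_int_of_nat)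
  qed
  have inf: "ramified_at (\<lambda>w. X (1 / w)) 0 \<longleftrightarrow> L * M \<noteq> 2"
    using npf zof assms(3) by (auto simp: ramified_at_def n_def)
  show ?thesis
  proof (rule set_eqI)
    fix p show "p \<in> {p. ramification_point X p} \<longleftrightarrow> p \<in> (if L * M = 2 then Some ` {z. \<phi> z = 0}
            else insert None (Some ` {z. \<phi> z = 0}))"
      by (cases p) (auto simp: fin inf)
  qed
qed

end
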